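(* Let $\{\alpha_{i,j,k}\}_{1\le i,j,k\le d}$ be real numbers invariant under all permutations of the three indices, and suppose the system $\frac{\partial\varphi}{\partial t_i}=\sum_{j,k}\alpha_{i,j,k}t_j\frac{\partial\varphi}{\partial t_k}+t_i\varphi$ ($i=1,\dots,d$) has a $C^2$ solution $\varphi$ on a neighborhood of $\mathbf 0\in\mathbb R^d$ with $\varphi(\mathbf 0)\neq0$. Let $A_k:=(\alpha_{k,r,s})_{1\le r,s\le d}$, $C_{i,j}:=A_iA_j-A_jA_i$, and $F(\mathbf t):=\sum_{i,j,k}\alpha_{i,j,k}t_it_jt_k$. Then for all $i,j\in\{1,\dots,d\}$ and every $\xi\in\mathbb R^d$, the function $s\mapsto F(\mathbf t(s,\xi))$ is constant on $\mathbb R$, where $\mathbf t(s,\xi):=\exp(sC_{i,j})\xi$ is the solution of $\frac{d}{ds}\mathbf t(s,\xi)=C_{i,j}\mathbf t(s,\xi)$, $\mathbf t(0,\xi)=\xi$. *)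

theory Defs
  imports "HOL-Analysis.Analysis"
begin

text \<open>Vectors in R^d are modelled as real^'n for a finite index type 'n (d = CARD('n)).\<close>

definition has_partial :: "(real^'n \<Rightarrow> real) \<Rightarrow> 'n \<Rightarrow> real^'n \<Rightarrow> real \<Rightarrow> bool" where
  "has_partial f i x D \<longleftrightarrow> ((\<lambda>h. f (x + h *\<^sub>R axis i 1)) has_real_derivative D) (at 0)"

definition C2_on :: "(real^'n) set \<Rightarrow> (real^'n \<Rightarrow> real) \<Rightarrow> bool" where
  "C2_on U f \<longleftrightarrow> open U \<and> continuous_on U f \<and>
     (\<exists>g h. (\<forall>i. \<forall>x\<in>U. has_partial f i x (g i x)) \<and> (\<forall>i. continuous_on U (g i)) \<and>
            (\<forall>i j. \<forall>x\<in>U. has_partial (g i) j x (h i j x)) \<and> (\<forall>i j. continuous_on U (h i j)))"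

definition partial :: "(real^'n \<Rightarrow> real) \<Rightarrow> 'n \<Rightarrow> real^'n \<Rightarrow> real" where
  "partial f i x = (THE D. has_partial f i x D)"

definition coeff_mat :: "('n \<Rightarrow> 'n \<Rightarrow> 'n \<Rightarrow> real) \<Rightarrow> 'n \<Rightarrow> real^'n^'n" where
  "coeff_mat \<alpha> k = (\<chi> r s. \<alpha> k r s)"

definition commut :: "real^'n^'n \<Rightarrow> real^'n^'n \<Rightarrow> real^'n^'n" where
  "commut A B = A ** B - B ** A"

definition mat_pow :: "real^'n^'n \<Rightarrow> nat \<Rightarrow> real^'n^'n" where
  "mat_pow A n = ((\<lambda>M. A ** M) ^^ n) (mat 1)"

definition mat_exp :: "real^'n^'n \<Rightarrow> real^'n^'n" where
  "mat_exp A = (\<Sum>n. (1 / fact n) *\<^sub>R mat_pow A n)"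

definition cubic_form :: "('n::finite \<Rightarrow> 'n \<Rightarrow> 'n \<Rightarrow> real) \<Rightarrow> real^'n \<Rightarrow> real" where
  "cubic_form \<alpha> t = (\<Sum>i\<in>UNIV. \<Sum>j\<in>UNIV. \<Sum>k\<in>UNIV. \<alpha> i j k * t$i * t$j * t$k)"

end

theory Submission
  imports Defs
begin


lemma partial_shift:
  assumes "has_partial f i (x + a *\<^sub>R axis i 1) D"
  shows "DERIV (\<lambda>b. f (x + b *\<^sub>R axis i 1)) a :> D"
proof -
  have "DERIV (\<lambda>h. f ((x + a *\<^sub>R axis i 1) + h *\<^sub>R axis i 1)) 0 :> D"
    using assms by (simp add: has_partial_def)
  moreover have "(\<lambda>h. f ((x + a *\<^sub>R axis i 1) + h *\<^sub>R axis i 1)) = (\<lambda>h. f (x + (h + a) *\<^sub>R axis i 1))"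
    by (simp add: algebra_simps)
  ultimately show ?thesis using DERIV_shift[of "\<lambda>b. f (x + b *\<^sub>R axis i 1)" D 0 a] by simp
qed

lemma box_mvt:
  fixes f g h :: "real^'n \<Rightarrow> real" and e q x :: "real^'n"
  assumes r: "r > 0"
    and df: "\<And>a b. \<bar>a\<bar> \<le> r \<Longrightarrow> \<bar>b\<bar> \<le> r \<Longrightarrow>
               DERIV (\<lambda>s. f (x + s *\<^sub>R e + b *\<^sub>R q)) a :> g (x + a *\<^sub>R e + b *\<^sub>R q)"
    and dg: "\<And>a b. \<bar>a\<bar> \<le> r \<Longrightarrow> \<bar>b\<bar> \<le> r \<Longrightarrow>
               DERIV (\<lambda>s. g (x + a *\<^sub>R e + s *\<^sub>R q)) b :> h (x + a *\<^sub>R e + b *\<^sub>R q)"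
  shows "\<exists>c d. \<bar>c\<bar> \<le> r \<and> \<bar>d\<bar> \<le> r \<and>
     f (x + r *\<^sub>R e + r *\<^sub>R q) - f (x + 0 *\<^sub>R e + r *\<^sub>R q) - f (x + r *\<^sub>R e + 0 *\<^sub>R q) + f (x + 0 *\<^sub>R e + 0 *\<^sub>R q)
      = r^2 * h (x + c *\<^sub>R e + d *\<^sub>R q)"
proof -
  define G where "G a = f (x + a *\<^sub>R e + r *\<^sub>R q) - f (x + a *\<^sub>R e + 0 *\<^sub>R q)" for a
  have "\<And>a. 0 \<le> a \<Longrightarrow> a \<le> r \<Longrightarrow> DERIV G a :> g (x + a *\<^sub>R e + r *\<^sub>R q) - g (x + a *\<^sub>R e + 0 *\<^sub>R q)"
    unfolding G_def using r by (intro DERIV_diff df) auto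
  from MVT2[OF r this] obtain c where c: "0 < c" "c < r"
    "G r - G 0 = (r - 0) * (g (x + c *\<^sub>R e + r *\<^sub>R q) - g (x + c *\<^sub>R e + 0 *\<^sub>R q))" by blast
  have "\<And>b. 0 \<le> b \<Longrightarrow> b \<le> r \<Longrightarrow> DERIV (\<lambda>s. g (x + c *\<^sub>R e + s *\<^sub>R q)) b :> h (x + c *\<^sub>R e + b *\<^sub>R q)"
    using c by (intro dg) auto
  from MVT2[OF r this] obtain d where d: "0 < d" "d < r"
    "g (x + c *\<^sub>R e + r *\<^sub>R q) - g (x + c *\<^sub>R e + 0 *\<^sub>R q) = (r - 0) * h (x + c *\<^sub>R e + d *\<^sub>R q)" by blast
  show ?thesis
    apply (rule exI[of _ c], rule exI[of _ d])
    using c d unfolding G_def by (auto simp: power2_eq_square)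
qed

lemma clairaut:
  fixes f :: "real^'n \<Rightarrow> real"
  assumes U: "open U" and x: "x \<in> U"
    and gi: "\<And>y. y \<in> U \<Longrightarrow> has_partial f i y (Gi y)"
    and gp: "\<And>y. y \<in> U \<Longrightarrow> has_partial f p y (Gp y)"
    and hip: "\<And>y. y \<in> U \<Longrightarrow> has_partial Gi p y (Hip y)"
    and hpi: "\<And>y. y \<in> U \<Longrightarrow> has_partial Gp i y (Hpi y)"
    and cip: "continuous_on U Hip" and cpi: "continuous_on U Hpi"
  shows "Hip x = Hpi x"
proof (rule ccontr)
  assume ne: "Hip x \<noteq> Hpi x"
  define \<epsilon> where "\<epsilon> = \<bar>Hip x - Hpi x\<bar> / 2"
  have \<epsilon>: "\<epsilon> > 0" using ne by (simp add: \<epsilon>_def)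
  obtain R where R: "R > 0" "ball x R \<subseteq> U" using U x open_contains_ball by blast
  have "isCont Hip x" using cip U x continuous_on_eq_continuous_at by blast
  then obtain d1 where d1: "d1 > 0" "\<And>y. dist y x < d1 \<Longrightarrow> dist (Hip y) (Hip x) < \<epsilon>"
    using \<epsilon> by (metis continuous_at_eps_delta)
  have "isCont Hpi x" using cpi U x continuous_on_eq_continuous_at by blast
  then obtain d2 where d2: "d2 > 0" "\<And>y. dist y x < d2 \<Longrightarrow> dist (Hpi y) (Hpi x) < \<epsilon>"
    using \<epsilon> by (metis continuous_at_eps_delta)
  define r where "r = min R (min d1 d2) / 3"
  have r: "r > 0" using R d1 d2 by (simp add: r_def)
  define ei where "ei = axis i (1::real)"
  define ep where "ep = axis p (1::real)"
  have near: "norm (a *\<^sub>R u + b *\<^sub>R v) < min R (min d1 d2)"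
    if "\<bar>a\<bar> \<le> r" "\<bar>b\<bar> \<le> r" "norm u = 1" "norm v = 1" for a b and u v :: "real^'n"
  proof -
    have "norm (a *\<^sub>R u + b *\<^sub>R v) \<le> \<bar>a\<bar> + \<bar>b\<bar>"
      using norm_triangle_ineq[of "a *\<^sub>R u" "b *\<^sub>R v"] that by simp
    also have "\<dots> \<le> 2 * r" using that by simp
    also have "\<dots> < min R (min d1 d2)" using r R d1 d2 unfolding r_def by (auto simp: min_def)
    finally show ?thesis .
  qed
  have inU: "x + a *\<^sub>R u + b *\<^sub>R v \<in> U"
    if "\<bar>a\<bar> \<le> r" "\<bar>b\<bar> \<le> r" "norm u = 1" "norm v = 1" for a b and u v :: "real^'n"
  proof -
    have "dist x (x + a *\<^sub>R u + b *\<^sub>R v) = norm (a *\<^sub>R u + b *\<^sub>R v)"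
      by (metis add.assoc dist_add_cancel dist_0_norm dist_commute add.right_neutral)
    hence "dist x (x + a *\<^sub>R u + b *\<^sub>R v) < R"
      using near[OF that] by simp
    then show ?thesis using R by auto
  qed
  have "\<exists>c d. \<bar>c\<bar> \<le> r \<and> \<bar>d\<bar> \<le> r \<and>
     f (x + r *\<^sub>R ei + r *\<^sub>R ep) - f (x + 0 *\<^sub>R ei + r *\<^sub>R ep) - f (x + r *\<^sub>R ei + 0 *\<^sub>R ep) + f (x + 0 *\<^sub>R ei + 0 *\<^sub>R ep)
      = r^2 * Hip (x + c *\<^sub>R ei + d *\<^sub>R ep)"
  proof (rule box_mvt[OF r])
    fix a b assume ab: "\<bar>a\<bar> \<le> r" "\<bar>b\<bar> \<le> r"
    have "has_partial f i ((x + b *\<^sub>R ep) + a *\<^sub>R ei) (Gi (x + a *\<^sub>R ei + b *\<^sub>R ep))"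
      using gi[OF inU[OF ab]] unfolding ei_def ep_def by (simp add: algebra_simps)
    from partial_shift[OF this[unfolded ei_def]]
    show "DERIV (\<lambda>s. f (x + s *\<^sub>R ei + b *\<^sub>R ep)) a :> Gi (x + a *\<^sub>R ei + b *\<^sub>R ep)"
      unfolding ei_def by (simp add: algebra_simps)
    have "has_partial Gi p ((x + a *\<^sub>R ei) + b *\<^sub>R ep) (Hip (x + a *\<^sub>R ei + b *\<^sub>R ep))"
      using hip[OF inU[OF ab]] unfolding ei_def ep_def by (simp add: algebra_simps)
    from partial_shift[OF this[unfolded ep_def]]
    show "DERIV (\<lambda>s. Gi (x + a *\<^sub>R ei + s *\<^sub>R ep)) b :> Hip (x + a *\<^sub>R ei + b *\<^sub>R ep)"
      unfolding ep_def by (simp add: algebra_simps)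
  qed
  then obtain c d where cd: "\<bar>c\<bar> \<le> r" "\<bar>d\<bar> \<le> r"
    "f (x + r *\<^sub>R ei + r *\<^sub>R ep) - f (x + r *\<^sub>R ep) - f (x + r *\<^sub>R ei) + f x
      = r^2 * Hip (x + c *\<^sub>R ei + d *\<^sub>R ep)" by auto
  have "\<exists>c d. \<bar>c\<bar> \<le> r \<and> \<bar>d\<bar> \<le> r \<and>
     f (x + r *\<^sub>R ep + r *\<^sub>R ei) - f (x + 0 *\<^sub>R ep + r *\<^sub>R ei) - f (x + r *\<^sub>R ep + 0 *\<^sub>R ei) + f (x + 0 *\<^sub>R ep + 0 *\<^sub>R ei)
      = r^2 * Hpi (x + c *\<^sub>R ep + d *\<^sub>R ei)"
  proof (rule box_mvt[OF r])
    fix a b assume ab: "\<bar>a\<bar> \<le> r" "\<bar>b\<bar> \<le> r"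
    have "has_partial f p ((x + b *\<^sub>R ei) + a *\<^sub>R ep) (Gp (x + a *\<^sub>R ep + b *\<^sub>R ei))"
      using gp[OF inU[OF ab]] unfolding ei_def ep_def by (simp add: algebra_simps)
    from partial_shift[OF this[unfolded ep_def]]
    show "DERIV (\<lambda>s. f (x + s *\<^sub>R ep + b *\<^sub>R ei)) a :> Gp (x + a *\<^sub>R ep + b *\<^sub>R ei)"
      unfolding ep_def by (simp add: algebra_simps)
    have "has_partial Gp i ((x + a *\<^sub>R ep) + b *\<^sub>R ei) (Hpi (x + a *\<^sub>R ep + b *\<^sub>R ei))"
      using hpi[OF inU[OF ab]] unfolding ei_def ep_def by (simp add: algebra_simps)
    from partial_shift[OF this[unfolded ei_def]]
    show "DERIV (\<lambda>s. Gp (x + a *\<^sub>R ep + s *\<^sub>R ei)) b :> Hpi (x + a *\<^sub>R ep + b *\<^sub>R ei)"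
      unfolding ei_def by (simp add: algebra_simps)
  qed
  then obtain c' d' where cd': "\<bar>c'\<bar> \<le> r" "\<bar>d'\<bar> \<le> r"
    "f (x + r *\<^sub>R ep + r *\<^sub>R ei) - f (x + r *\<^sub>R ei) - f (x + r *\<^sub>R ep) + f x
      = r^2 * Hpi (x + c' *\<^sub>R ep + d' *\<^sub>R ei)" by auto
  have sw: "x + r *\<^sub>R ep + r *\<^sub>R ei = x + r *\<^sub>R ei + r *\<^sub>R ep" by (simp add: algebra_simps)
  have "r^2 * Hip (x + c *\<^sub>R ei + d *\<^sub>R ep) = r^2 * Hpi (x + c' *\<^sub>R ep + d' *\<^sub>R ei)"
    using cd(3) cd'(3) unfolding sw by linarith
  hence eq: "Hip (x + c *\<^sub>R ei + d *\<^sub>R ep) = Hpi (x + c' *\<^sub>R ep + d' *\<^sub>R ei)" using r by simp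
  have n1: "norm (c *\<^sub>R ei + d *\<^sub>R ep) < d1"
    using near[OF cd(1,2)] unfolding ei_def ep_def by simp
  have n2: "norm (c' *\<^sub>R ep + d' *\<^sub>R ei) < d2"
    using near[OF cd'(1,2)] unfolding ei_def ep_def by simp
  have "dist (Hip (x + c *\<^sub>R ei + d *\<^sub>R ep)) (Hip x) < \<epsilon>"
    using d1(2) n1 by (simp add: dist_norm add.assoc)
  moreover have "dist (Hpi (x + c' *\<^sub>R ep + d' *\<^sub>R ei)) (Hpi x) < \<epsilon>"
    using d2(2) n2 by (simp add: dist_norm add.assoc)
  ultimately have "\<bar>Hip x - Hpi x\<bar> < 2 * \<epsilon>" using eq by (simp add: dist_real_def)
  then show False by (simp add: \<epsilon>_def)
qed




definition outer :: "real^'n \<Rightarrow> real^'n \<Rightarrow> real^'n^'n" where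
  "outer a b = (\<chi> i j. a$i * b$j)"

lemma mm_sub_ldistrib: "(A::real^'n^'n) ** (B - C) = A ** B - A ** C"
  by (simp add: matrix_matrix_mult_def vec_eq_iff algebra_simps sum_subtractf)
lemma mm_add_rdistrib: "((A::real^'n^'n) + B) ** C = A ** C + B ** C"
  by (simp add: matrix_matrix_mult_def vec_eq_iff algebra_simps sum.distrib)
lemma mm_sub_rdistrib: "((A::real^'n^'n) - B) ** C = A ** C - B ** C"
  by (simp add: matrix_matrix_mult_def vec_eq_iff algebra_simps sum_subtractf)
lemma mm_scaleR_left: "(c *\<^sub>R (A::real^'n^'n)) ** B = c *\<^sub>R (A ** B)"
  by (simp add: matrix_matrix_mult_def vec_eq_iff algebra_simps sum_distrib_left)
lemma mm_scaleR_right: "(A::real^'n^'n) ** (c *\<^sub>R B) = c *\<^sub>R (A ** B)"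
  by (simp add: matrix_matrix_mult_def vec_eq_iff algebra_simps sum_distrib_left)
lemma transpose_add': "transpose ((A::real^'n^'n) + B) = transpose A + transpose B"
  by (simp add: transpose_def vec_eq_iff)
lemma transpose_diff': "transpose ((A::real^'n^'n) - B) = transpose A - transpose B"
  by (simp add: transpose_def vec_eq_iff)
lemma transpose_outer: "transpose (outer a b) = outer b a"
  by (simp add: transpose_def outer_def vec_eq_iff)
lemma outer_mult: "outer a b ** (A::real^'n^'n) = outer a (transpose A *v b)"
  by (simp add: outer_def matrix_matrix_mult_def matrix_vector_mult_def transpose_def vec_eq_iff
      sum_distrib_left algebra_simps)
lemma outer_diff_right: "outer a (b - c) = outer a b - outer a c"
  by (simp add: outer_def vec_eq_iff algebra_simps)
lemma outer_scaleR_right: "outer a (c *\<^sub>R b) = c *\<^sub>R outer a b"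
  by (simp add: outer_def vec_eq_iff algebra_simps)

lemma alg_commute:
  fixes M N H :: "real^'n^'n" and g t :: "real^'n" and f :: real
  assumes sM: "transpose M = M" and sN: "transpose N = N" and sH: "transpose H = H"
    and eH: "H = N + M ** H + f *\<^sub>R mat 1 + outer t g"
    and eg: "g = M *v g + f *\<^sub>R t"
  shows "N ** M = M ** N"
proof -
  define S where "S = (H - M ** H) ** (mat 1 - M)"
  have S1: "S = H - M ** H - H ** M + M ** H ** M"
    unfolding S_def by (simp add: mm_sub_ldistrib mm_sub_rdistrib matrix_mul_assoc)
  have tS: "transpose S = S"
    unfolding S1 by (simp add: transpose_add' transpose_diff' matrix_transpose_mul sM sH matrix_mul_assoc)
  have "H - M ** H = N + f *\<^sub>R mat 1 + outer t g"
    using eH by (simp add: algebra_simps)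
  hence "S = (N + f *\<^sub>R mat 1 + outer t g) ** (mat 1 - M)" unfolding S_def by simp
  also have "\<dots> = N - N ** M + f *\<^sub>R mat 1 - f *\<^sub>R M + (outer t g - outer t g ** M)"
    by (simp add: mm_sub_ldistrib mm_add_rdistrib mm_scaleR_left algebra_simps)
  also have "outer t g ** M = outer t g - f *\<^sub>R outer t t"
  proof -
    have "transpose M *v g = g - f *\<^sub>R t" using eg sM by (simp add: algebra_simps)
    thus ?thesis by (simp add: outer_mult outer_diff_right outer_scaleR_right)
  qed
  finally have S2: "S = N - N ** M + f *\<^sub>R mat 1 - f *\<^sub>R M + f *\<^sub>R outer t t" by simp
  have T: "transpose S = N - M ** N + f *\<^sub>R mat 1 - f *\<^sub>R M + f *\<^sub>R outer t t"
    unfolding S2 by (simp add: transpose_add' transpose_diff' matrix_transpose_mul sM sN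
        transpose_scalar transpose_outer)
  have "N - N ** M + (f *\<^sub>R mat 1 - f *\<^sub>R M + f *\<^sub>R outer t t)
      = N - M ** N + (f *\<^sub>R mat 1 - f *\<^sub>R M + f *\<^sub>R outer t t)"
    using tS S2 T by (simp add: add.assoc add_diff_eq)
  hence "N - N ** M = N - M ** N" by (rule add_right_imp_eq)
  thus ?thesis by simp
qed




definition Mv :: "('n::finite \<Rightarrow> 'n \<Rightarrow> 'n \<Rightarrow> real) \<Rightarrow> real^'n \<Rightarrow> real^'n^'n" where
  "Mv \<alpha> x = (\<chi> i k. \<Sum>j\<in>UNIV. \<alpha> i j k * x$j)"

definition symm3 :: "('n \<Rightarrow> 'n \<Rightarrow> 'n \<Rightarrow> real) \<Rightarrow> bool" where
  "symm3 \<alpha> \<longleftrightarrow> (\<forall>i j k. \<alpha> i j k = \<alpha> i k j \<and> \<alpha> i j k = \<alpha> j i k \<and> \<alpha> i j k = \<alpha> j k i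
                      \<and> \<alpha> i j k = \<alpha> k i j \<and> \<alpha> i j k = \<alpha> k j i)"

lemma Mv_transpose: "symm3 \<alpha> \<Longrightarrow> transpose (Mv \<alpha> x) = Mv \<alpha> x"
proof -
  assume "symm3 \<alpha>"
  hence s: "\<alpha> a b c = \<alpha> c b a" for a b c unfolding symm3_def by blast
  show ?thesis unfolding transpose_def Mv_def vec_eq_iff by (simp add: s[of _ _ "_"])
qed

lemma Mv_add: "Mv \<alpha> (x + y) = Mv \<alpha> x + Mv \<alpha> y"
  by (simp add: Mv_def vec_eq_iff algebra_simps sum.distrib)
lemma Mv_scaleR: "Mv \<alpha> (c *\<^sub>R x) = c *\<^sub>R Mv \<alpha> x"
  by (simp add: Mv_def vec_eq_iff algebra_simps sum_distrib_left)
lemma Mv_zero: "Mv \<alpha> 0 = 0"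
  by (simp add: Mv_def vec_eq_iff)

lemma Mv_mult_vec: "(Mv \<alpha> t *v G)$i = (\<Sum>j\<in>UNIV. \<Sum>k\<in>UNIV. \<alpha> i j k * t$j * G$k)"
proof -
  have "(Mv \<alpha> t *v G)$i = (\<Sum>k\<in>UNIV. \<Sum>j\<in>UNIV. \<alpha> i j k * t$j * G$k)"
    by (simp add: Mv_def matrix_vector_mult_def sum_distrib_right)
  also have "\<dots> = (\<Sum>j\<in>UNIV. \<Sum>k\<in>UNIV. \<alpha> i j k * t$j * G$k)" by (rule sum.swap)
  finally show ?thesis .
qed

lemma diff_pde:
  fixes \<phi> :: "real^'n::finite \<Rightarrow> real"
  assumes U: "open U" and t: "t \<in> U"
    and hasg: "\<And>i x. x \<in> U \<Longrightarrow> has_partial \<phi> i x (g i x)"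
    and hash: "\<And>i j x. x \<in> U \<Longrightarrow> has_partial (g i) j x (h i j x)"
    and pdeg: "\<And>i t. t \<in> U \<Longrightarrow> g i t = (\<Sum>j\<in>UNIV. \<Sum>k\<in>UNIV. \<alpha> i j k * t$j * g k t) + t$i * \<phi> t"
  shows "h i p t = (\<Sum>j\<in>UNIV. \<Sum>k\<in>UNIV. \<alpha> i j k * (axis p 1 $ j * g k t + t$j * h k p t))
                   + (axis p 1 $ i * \<phi> t + t$i * g p t)"
proof -
  define ep :: "real^'n" where "ep = axis p 1"
  have ev: "eventually (\<lambda>s. t + s *\<^sub>R ep \<in> U) (nhds (0::real))"
  proof -
    have "open ((\<lambda>s::real. t + s *\<^sub>R ep) -` U)"
      by (rule open_vimage[OF U]) (intro continuous_intros)
    thus ?thesis using t unfolding eventually_nhds by (intro exI[of _ "(\<lambda>s::real. t + s *\<^sub>R ep) -` U"]) auto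
  qed
  have d1: "DERIV (\<lambda>s. g i (t + s *\<^sub>R ep)) 0 :> h i p t"
    using hash[OF t] unfolding has_partial_def ep_def by simp
  have dk: "DERIV (\<lambda>s. g k (t + s *\<^sub>R ep)) 0 :> h k p t" for k
    using hash[OF t] unfolding has_partial_def ep_def by simp
  have dphi: "DERIV (\<lambda>s. \<phi> (t + s *\<^sub>R ep)) 0 :> g p t"
    using hasg[OF t] unfolding has_partial_def ep_def by simp
  have dR: "DERIV (\<lambda>s. (\<Sum>j\<in>UNIV. \<Sum>k\<in>UNIV. \<alpha> i j k * (t$j + s * ep$j) * g k (t + s *\<^sub>R ep))
                 + (t$i + s * ep$i) * \<phi> (t + s *\<^sub>R ep)) 0 :>
       ((\<Sum>j\<in>UNIV. \<Sum>k\<in>UNIV. \<alpha> i j k * (ep $ j * g k t + t$j * h k p t))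
                   + (ep $ i * \<phi> t + t$i * g p t))"
    apply (rule DERIV_cong)
     apply (rule derivative_eq_intros dk dphi refl)+
    apply (simp add: algebra_simps)
    done
  have "DERIV (\<lambda>s. g i (t + s *\<^sub>R ep)) 0 :> ((\<Sum>j\<in>UNIV. \<Sum>k\<in>UNIV. \<alpha> i j k * (ep $ j * g k t + t$j * h k p t))
                   + (ep $ i * \<phi> t + t$i * g p t))"
  proof (subst DERIV_cong_ev[OF refl _ refl])
    show "\<forall>\<^sub>F s in nhds 0. g i (t + s *\<^sub>R ep) = (\<Sum>j\<in>UNIV. \<Sum>k\<in>UNIV. \<alpha> i j k * (t$j + s * ep$j) * g k (t + s *\<^sub>R ep))
                 + (t$i + s * ep$i) * \<phi> (t + s *\<^sub>R ep)"
      using ev by eventually_elim (subst pdeg, auto)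
  qed (rule dR)
  from DERIV_unique[OF d1 this] show ?thesis unfolding ep_def .
qed

lemma axis_sum:
  fixes \<alpha> :: "'n::finite \<Rightarrow> 'n \<Rightarrow> 'n \<Rightarrow> real" and a :: "'n \<Rightarrow> real" and b :: "'n \<Rightarrow> 'n \<Rightarrow> real"
  shows "(\<Sum>j\<in>UNIV. \<Sum>k\<in>UNIV. \<alpha> i j k * (axis p 1 $ j * a k + b j k))
   = (\<Sum>k\<in>UNIV. \<alpha> i p k * a k) + (\<Sum>j\<in>UNIV. \<Sum>k\<in>UNIV. \<alpha> i j k * b j k)"
proof -
  have "(\<Sum>j\<in>UNIV. \<Sum>k\<in>UNIV. \<alpha> i j k * (axis p 1 $ j * a k + b j k))
     = (\<Sum>j\<in>UNIV. \<Sum>k\<in>UNIV. \<alpha> i j k * (axis p 1 $ j * a k)) + (\<Sum>j\<in>UNIV. \<Sum>k\<in>UNIV. \<alpha> i j k * b j k)"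
    by (simp add: distrib_left sum.distrib)
  also have "(\<Sum>j\<in>UNIV. \<Sum>k\<in>UNIV. \<alpha> i j k * (axis p 1 $ j * a k))
     = (\<Sum>j\<in>UNIV. if j = p then (\<Sum>k\<in>UNIV. \<alpha> i p k * a k) else 0)"
    by (rule sum.cong) (auto simp: axis_def)
  finally show ?thesis by simp
qed

lemma point_commute:
  fixes \<phi> :: "real^'n::finite \<Rightarrow> real"
  assumes sym: "symm3 \<alpha>" and U: "open U" and t: "t \<in> U"
    and hasg: "\<And>i x. x \<in> U \<Longrightarrow> has_partial \<phi> i x (g i x)"
    and hash: "\<And>i j x. x \<in> U \<Longrightarrow> has_partial (g i) j x (h i j x)"
    and conth: "\<And>i j. continuous_on U (h i j)"
    and pdeg: "\<And>i t. t \<in> U \<Longrightarrow> g i t = (\<Sum>j\<in>UNIV. \<Sum>k\<in>UNIV. \<alpha> i j k * t$j * g k t) + t$i * \<phi> t"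
  shows "Mv \<alpha> (\<chi> k. g k t) ** Mv \<alpha> t = Mv \<alpha> t ** Mv \<alpha> (\<chi> k. g k t)"
proof -
  define G where "G = (\<chi> k. g k t)"
  define H where "H = (\<chi> i p. h i p t)"
  have sH: "h i p x = h p i x" if x: "x \<in> U" for i p x
    by (rule clairaut[OF U x hasg hasg hash hash conth conth])
  have tH: "transpose H = H" unfolding H_def transpose_def vec_eq_iff by (simp add: sH[OF t, of _ _])
  have eg: "G = Mv \<alpha> t *v G + \<phi> t *\<^sub>R t"
  proof -
    have "(Mv \<alpha> t *v G + \<phi> t *\<^sub>R t)$i = (\<Sum>j\<in>UNIV. \<Sum>k\<in>UNIV. \<alpha> i j k * t$j * g k t) + t$i * \<phi> t" for i
      by (simp add: Mv_mult_vec G_def mult.commute)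
    hence "G$i = (Mv \<alpha> t *v G + \<phi> t *\<^sub>R t)$i" for i
      using pdeg[OF t, of i] unfolding G_def by (simp only: vec_lambda_beta)
    thus ?thesis by (simp add: vec_eq_iff)
  qed
  have eH: "H = Mv \<alpha> G + Mv \<alpha> t ** H + \<phi> t *\<^sub>R mat 1 + outer t G"
  proof -
    have "H$i$p = (Mv \<alpha> G + Mv \<alpha> t ** H + \<phi> t *\<^sub>R mat 1 + outer t G)$i$p" for i p
    proof -
      have "H$i$p = (\<Sum>k\<in>UNIV. \<alpha> i p k * g k t) + (\<Sum>j\<in>UNIV. \<Sum>k\<in>UNIV. \<alpha> i j k * (t$j * h k p t))
                   + (axis p 1 $ i * \<phi> t + t$i * g p t)"
      proof -
        have "H$i$p = h i p t" by (simp add: H_def)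
        also have "\<dots> = (\<Sum>j\<in>UNIV. \<Sum>k\<in>UNIV. \<alpha> i j k * (axis p 1 $ j * g k t + t$j * h k p t))
                   + (axis p 1 $ i * \<phi> t + t$i * g p t)"
          by (rule diff_pde[OF U t hasg hash pdeg])
        also have "\<dots> = (\<Sum>k\<in>UNIV. \<alpha> i p k * g k t) + (\<Sum>j\<in>UNIV. \<Sum>k\<in>UNIV. \<alpha> i j k * (t$j * h k p t))
                   + (axis p 1 $ i * \<phi> t + t$i * g p t)"
          using axis_sum[of \<alpha> i p "\<lambda>k. g k t" "\<lambda>j k. t$j * h k p t"] by simp
        finally show ?thesis .
      qed
      also have "(\<Sum>k\<in>UNIV. \<alpha> i p k * g k t) = (Mv \<alpha> G)$i$p"
      proof -
        have "\<alpha> i p k = \<alpha> i k p" for k using sym unfolding symm3_def by blast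
        thus ?thesis unfolding Mv_def G_def by (simp add: mult.commute)
      qed
      also have "(\<Sum>j\<in>UNIV. \<Sum>k\<in>UNIV. \<alpha> i j k * (t$j * h k p t)) = (Mv \<alpha> t ** H)$i$p"
      proof -
        have "(Mv \<alpha> t ** H)$i$p = (\<Sum>k\<in>UNIV. \<Sum>j\<in>UNIV. \<alpha> i j k * (t$j * h k p t))"
          by (simp add: Mv_def H_def matrix_matrix_mult_def sum_distrib_right mult.assoc)
        also have "\<dots> = (\<Sum>j\<in>UNIV. \<Sum>k\<in>UNIV. \<alpha> i j k * (t$j * h k p t))" by (rule sum.swap)
        finally show ?thesis by simp
      qed
      also have "axis p 1 $ i * \<phi> t + t$i * g p t = (\<phi> t *\<^sub>R mat 1 + outer t G)$i$p"
        by (simp add: axis_def mat_def outer_def G_def)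
      finally show ?thesis by simp
    qed
    thus ?thesis by (simp add: vec_eq_iff)
  qed
  show ?thesis
    using alg_commute[OF Mv_transpose[OF sym] Mv_transpose[OF sym] tH eH eg] unfolding G_def .
qed




lemma L_linear:
  fixes \<alpha> :: "'n::finite \<Rightarrow> 'n \<Rightarrow> 'n \<Rightarrow> real"
  shows "linear (\<lambda>v. Mv \<alpha> (Mu *v (Mu *v v)) ** Mu - Mu ** Mv \<alpha> (Mu *v (Mu *v v)))"
  by (rule linearI)
     (simp_all add: matrix_vector_right_distrib matrix_vector_mult_scaleR Mv_add Mv_scaleR
        mm_add_rdistrib matrix_add_ldistrib mm_scaleR_left mm_scaleR_right algebra_simps)

lemma key_commute:
  fixes \<phi> :: "real^'n::finite \<Rightarrow> real"
  assumes sym: "symm3 \<alpha>" and U: "open U" and U0: "0 \<in> U"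
    and hasg: "\<And>i x. x \<in> U \<Longrightarrow> has_partial \<phi> i x (g i x)"
    and hash: "\<And>i j x. x \<in> U \<Longrightarrow> has_partial (g i) j x (h i j x)"
    and conth: "\<And>i j. continuous_on U (h i j)"
    and contg: "\<And>i. continuous_on U (g i)"
    and contphi: "continuous_on U \<phi>"
    and pdeg: "\<And>i t. t \<in> U \<Longrightarrow> g i t = (\<Sum>j\<in>UNIV. \<Sum>k\<in>UNIV. \<alpha> i j k * t$j * g k t) + t$i * \<phi> t"
    and nz: "\<phi> 0 \<noteq> 0"
  shows "Mv \<alpha> (Mv \<alpha> u *v u) ** Mv \<alpha> u = Mv \<alpha> u ** Mv \<alpha> (Mv \<alpha> u *v u)"
proof -
  define G where "G t = (\<chi> k. g k t)" for t
  define Mu where "Mu = Mv \<alpha> u"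
  define w where "w = Mu *v u"
  define B0 where "B0 = Mv \<alpha> w ** Mu - Mu ** Mv \<alpha> w"
  define L where "L v = Mv \<alpha> (Mu *v (Mu *v v)) ** Mu - Mu ** Mv \<alpha> (Mu *v (Mu *v v))" for v
  have PC: "Mv \<alpha> (G t) ** Mv \<alpha> t = Mv \<alpha> t ** Mv \<alpha> (G t)" if "t \<in> U" for t
    unfolding G_def by (rule point_commute[OF sym U that hasg hash conth pdeg])
  have PG: "G t = Mv \<alpha> t *v G t + \<phi> t *\<^sub>R t" if t: "t \<in> U" for t
  proof -
    have "(Mv \<alpha> t *v G t + \<phi> t *\<^sub>R t)$i = (\<Sum>j\<in>UNIV. \<Sum>k\<in>UNIV. \<alpha> i j k * t$j * g k t) + t$i * \<phi> t" for i
      by (simp add: Mv_mult_vec G_def mult.commute)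
    hence "G t$i = (Mv \<alpha> t *v G t + \<phi> t *\<^sub>R t)$i" for i
      using pdeg[OF t, of i] unfolding G_def by (simp only: vec_lambda_beta)
    thus ?thesis by (simp add: vec_eq_iff)
  qed
  have G0: "G 0 = 0" using PG[OF U0] by (simp add: Mv_zero)
  have E0: "L (G (e *\<^sub>R u)) + \<phi> (e *\<^sub>R u) *\<^sub>R B0 = 0" if e: "e \<noteq> 0" and eu: "e *\<^sub>R u \<in> U" for e
  proof -
    define Ge where "Ge = G (e *\<^sub>R u)"
    define f where "f = \<phi> (e *\<^sub>R u)"
    have "Mv \<alpha> Ge ** (e *\<^sub>R Mu) = (e *\<^sub>R Mu) ** Mv \<alpha> Ge"
      using PC[OF eu] unfolding Ge_def Mu_def by (simp add: Mv_scaleR)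
    hence a: "Mv \<alpha> Ge ** Mu = Mu ** Mv \<alpha> Ge" using e by (simp add: mm_scaleR_left mm_scaleR_right)
    have b: "Ge = e *\<^sub>R (Mu *v Ge) + (f * e) *\<^sub>R u"
      using PG[OF eu] unfolding Ge_def f_def Mu_def
      by (simp add: Mv_scaleR scaleR_matrix_vector_assoc[symmetric])
    define V1 where "V1 = Mu *v Ge"
    have "Mv \<alpha> Ge = e *\<^sub>R Mv \<alpha> V1 + (f * e) *\<^sub>R Mu"
      using b unfolding V1_def Mu_def by (metis Mv_add Mv_scaleR)
    with a have "(e *\<^sub>R Mv \<alpha> V1 + (f * e) *\<^sub>R Mu) ** Mu = Mu ** (e *\<^sub>R Mv \<alpha> V1 + (f * e) *\<^sub>R Mu)"
      by simp
    hence "e *\<^sub>R (Mv \<alpha> V1 ** Mu) = e *\<^sub>R (Mu ** Mv \<alpha> V1)"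
      by (simp add: mm_add_rdistrib matrix_add_ldistrib mm_scaleR_left mm_scaleR_right)
    hence a2: "Mv \<alpha> V1 ** Mu = Mu ** Mv \<alpha> V1" using e by simp
    have "V1 = e *\<^sub>R (Mu *v V1) + (f * e) *\<^sub>R w"
      unfolding V1_def w_def
      by (subst b) (simp add: matrix_vector_right_distrib matrix_vector_mult_scaleR)
    hence "Mv \<alpha> V1 = e *\<^sub>R Mv \<alpha> (Mu *v V1) + (f * e) *\<^sub>R Mv \<alpha> w"
      by (metis Mv_add Mv_scaleR)
    with a2 have "(e *\<^sub>R Mv \<alpha> (Mu *v V1) + (f * e) *\<^sub>R Mv \<alpha> w) ** Mu
        = Mu ** (e *\<^sub>R Mv \<alpha> (Mu *v V1) + (f * e) *\<^sub>R Mv \<alpha> w)" by simp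
    hence "e *\<^sub>R (Mv \<alpha> (Mu *v V1) ** Mu + f *\<^sub>R (Mv \<alpha> w ** Mu))
         = e *\<^sub>R (Mu ** Mv \<alpha> (Mu *v V1) + f *\<^sub>R (Mu ** Mv \<alpha> w))"
      by (simp add: mm_add_rdistrib matrix_add_ldistrib mm_scaleR_left mm_scaleR_right scaleR_add_right mult.commute)
    hence "Mv \<alpha> (Mu *v V1) ** Mu + f *\<^sub>R (Mv \<alpha> w ** Mu) = Mu ** Mv \<alpha> (Mu *v V1) + f *\<^sub>R (Mu ** Mv \<alpha> w)"
      using e by simp
    thus ?thesis unfolding L_def B0_def V1_def Ge_def f_def
      by (simp add: algebra_simps)
  qed
  have ev: "eventually (\<lambda>e. L (G (e *\<^sub>R u)) + \<phi> (e *\<^sub>R u) *\<^sub>R B0 = 0) (at (0::real))"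
  proof -
    have "open ((\<lambda>e::real. e *\<^sub>R u) -` U)"
      by (rule open_vimage[OF U]) (intro continuous_intros)
    hence "eventually (\<lambda>e::real. e *\<^sub>R u \<in> U) (nhds 0)"
      using U0 unfolding eventually_nhds by (intro exI[of _ "(\<lambda>e::real. e *\<^sub>R u) -` U"]) auto
    hence "eventually (\<lambda>e::real. e *\<^sub>R u \<in> U) (at 0)"
      by (simp add: eventually_at_filter eventually_mono)
    moreover have "eventually (\<lambda>e::real. e \<noteq> 0) (at 0)" by (simp add: eventually_at_filter)
    ultimately show ?thesis by eventually_elim (rule E0)
  qed
  have contG: "continuous_on U G"
    unfolding G_def by (intro continuous_on_vec_lambda contg)
  have tG: "((\<lambda>e::real. G (e *\<^sub>R u)) \<longlongrightarrow> G 0) (at 0)"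
  proof -
    have "isCont G 0" using contG U U0 continuous_on_eq_continuous_at by blast
    moreover have "isCont (\<lambda>e::real. e *\<^sub>R u) 0" by (intro continuous_intros)
    ultimately have "isCont (\<lambda>e::real. G (e *\<^sub>R u)) 0"
      using continuous_at_compose[of 0 "\<lambda>e::real. e *\<^sub>R u" G] by (simp add: o_def)
    thus ?thesis by (simp add: isCont_def)
  qed
  have tphi: "((\<lambda>e::real. \<phi> (e *\<^sub>R u)) \<longlongrightarrow> \<phi> 0) (at 0)"
  proof -
    have "isCont \<phi> 0" using contphi U U0 continuous_on_eq_continuous_at by blast
    moreover have "isCont (\<lambda>e::real. e *\<^sub>R u) 0" by (intro continuous_intros)
    ultimately have "isCont (\<lambda>e::real. \<phi> (e *\<^sub>R u)) 0"
      using continuous_at_compose[of 0 "\<lambda>e::real. e *\<^sub>R u" \<phi>] by (simp add: o_def)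
    thus ?thesis by (simp add: isCont_def)
  qed
  have linL: "linear L" unfolding L_def by (rule L_linear)
  have "isCont L (G 0)"
    using linL by (simp add: linear_continuous_at linear_conv_bounded_linear)
  hence tL: "((\<lambda>e::real. L (G (e *\<^sub>R u))) \<longlongrightarrow> L (G 0)) (at 0)"
    using tG isCont_tendsto_compose by blast
  have "((\<lambda>e::real. L (G (e *\<^sub>R u)) + \<phi> (e *\<^sub>R u) *\<^sub>R B0) \<longlongrightarrow> L (G 0) + \<phi> 0 *\<^sub>R B0) (at 0)"
    by (intro tendsto_intros tL tphi)
  moreover have "((\<lambda>e::real. L (G (e *\<^sub>R u)) + \<phi> (e *\<^sub>R u) *\<^sub>R B0) \<longlongrightarrow> 0) (at 0)"
    using ev by (rule tendsto_eventually)
  ultimately have "L (G 0) + \<phi> 0 *\<^sub>R B0 = 0" by (rule tendsto_unique[rotated]) simp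
  moreover have "L (G 0) = 0" using G0 linL by (simp add: linear_0)
  ultimately have "B0 = 0" using nz by simp
  thus ?thesis unfolding B0_def w_def Mu_def by simp
qed




lemma mat_pow_Suc: "mat_pow A (Suc n) = A ** mat_pow A n"
  by (simp add: mat_pow_def)
lemma mat_pow_0: "mat_pow A 0 = mat 1"
  by (simp add: mat_pow_def)

lemma mat_pow_scale: "mat_pow (s *\<^sub>R (C::real^'n^'n)) n = s^n *\<^sub>R mat_pow C n"
  by (induction n) (simp_all add: mat_pow_Suc mat_pow_0 mm_scaleR_left mm_scaleR_right)

lemma mat_pow_entry_bound:
  fixes C :: "real^'n^'n"
  defines "K \<equiv> (\<Sum>r\<in>UNIV. \<Sum>q\<in>UNIV. \<bar>C$r$q\<bar>)"
  shows "\<bar>mat_pow C n $ r $ q\<bar> \<le> K^n"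
proof (induction n arbitrary: r q)
  case 0 thus ?case by (simp add: mat_pow_0 mat_def)
next
  case (Suc n)
  have K0: "(\<Sum>q\<in>UNIV. \<bar>C$r$q\<bar>) \<le> K"
    unfolding K_def by (rule member_le_sum) auto
  have "\<bar>mat_pow C (Suc n) $ r $ q\<bar> = \<bar>\<Sum>p\<in>UNIV. C$r$p * mat_pow C n $ p $ q\<bar>"
    by (simp add: mat_pow_Suc matrix_matrix_mult_def)
  also have "\<dots> \<le> (\<Sum>p\<in>UNIV. \<bar>C$r$p\<bar> * K^n)"
    by (rule order_trans[OF sum_abs]) (auto intro!: sum_mono mult_left_mono Suc simp: abs_mult)
  also have "\<dots> = (\<Sum>p\<in>UNIV. \<bar>C$r$p\<bar>) * K^n" by (simp add: sum_distrib_right)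
  also have "\<dots> \<le> K * K^n" using K0 by (intro mult_right_mono) (auto simp: K_def intro!: zero_le_power sum_nonneg)
  finally show ?case by simp
qed

lemma norm_mat_le: "norm (A::real^'n^'n) \<le> (\<Sum>r\<in>UNIV. \<Sum>q\<in>UNIV. \<bar>A$r$q\<bar>)"
proof -
  have "norm A \<le> (\<Sum>r\<in>UNIV. norm (A$r))"
    unfolding norm_vec_def by (rule L2_set_le_sum) simp
  also have "\<dots> \<le> (\<Sum>r\<in>UNIV. \<Sum>q\<in>UNIV. \<bar>A$r$q\<bar>)"
    by (intro sum_mono norm_le_l1_cart)
  finally show ?thesis .
qed

lemma mat_pow_norm_bound:
  fixes C :: "real^'n^'n"
  shows "norm (mat_pow C n) \<le> real (CARD('n))^2 * (\<Sum>r\<in>UNIV. \<Sum>q\<in>UNIV. \<bar>C$r$q\<bar>)^n"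
proof -
  have "norm (mat_pow C n) \<le> (\<Sum>r\<in>(UNIV::'n set). \<Sum>q\<in>(UNIV::'n set). (\<Sum>r\<in>UNIV. \<Sum>q\<in>UNIV. \<bar>C$r$q\<bar>)^n)"
    by (rule order_trans[OF norm_mat_le]) (intro sum_mono mat_pow_entry_bound)
  also have "\<dots> = real (CARD('n))^2 * (\<Sum>r\<in>UNIV. \<Sum>q\<in>UNIV. \<bar>C$r$q\<bar>)^n"
    by (simp add: power2_eq_square)
  finally show ?thesis .
qed

lemma exp_summable: "summable (\<lambda>n. (1 / fact n) *\<^sub>R mat_pow (s *\<^sub>R (C::real^'n^'n)) n)"
proof (rule summable_comparison_test)
  define K where "K = (\<Sum>r\<in>UNIV. \<Sum>q\<in>UNIV. \<bar>C$r$q\<bar>)"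
  define D where "D = real (CARD('n))^2"
  show "summable (\<lambda>n. D * (inverse (fact n) * (\<bar>s\<bar> * K)^n))"
    by (intro summable_mult summable_exp)
  show "\<exists>N. \<forall>n\<ge>N. norm ((1 / fact n) *\<^sub>R mat_pow (s *\<^sub>R C) n) \<le> D * (inverse (fact n) * (\<bar>s\<bar> * K)^n)"
  proof (intro exI allI impI)
    fix n :: nat
    have "norm ((1 / fact n) *\<^sub>R mat_pow (s *\<^sub>R C) n) = inverse (fact n) * \<bar>s\<bar>^n * norm (mat_pow C n)"
      by (simp add: mat_pow_scale power_abs divide_inverse abs_mult)
    also have "\<dots> \<le> inverse (fact n) * \<bar>s\<bar>^n * (D * K^n)"
      unfolding D_def K_def by (intro mult_left_mono mat_pow_norm_bound) auto
    also have "\<dots> = D * (inverse (fact n) * (\<bar>s\<bar> * K)^n)" by (simp add: power_mult_distrib)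
    finally show "norm ((1 / fact n) *\<^sub>R mat_pow (s *\<^sub>R C) n) \<le> D * (inverse (fact n) * (\<bar>s\<bar> * K)^n)" .
  qed
qed

lemma lin_comp:
  fixes B :: "real^'n^'n"
  shows "bounded_linear (\<lambda>A::real^'n^'n. ((B ** A) *v \<xi>) $ k)"
proof -
  have "linear (\<lambda>A::real^'n^'n. ((B ** A) *v \<xi>) $ k)"
    by (rule linearI)
       (simp_all add: matrix_add_ldistrib mm_scaleR_right matrix_vector_mult_def sum.distrib
          algebra_simps sum_distrib_left)
  thus ?thesis by (simp add: linear_conv_bounded_linear)
qed

lemma exp_component:
  fixes B C :: "real^'n^'n"
  shows "((B ** mat_exp (s *\<^sub>R C)) *v \<xi>) $ k
     = (\<Sum>n. ((B ** mat_pow C n) *v \<xi>) $ k / fact n * s^n)"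
proof -
  have "((B ** mat_exp (s *\<^sub>R C)) *v \<xi>) $ k
     = (\<Sum>n. ((B ** ((1 / fact n) *\<^sub>R mat_pow (s *\<^sub>R C) n)) *v \<xi>) $ k)"
    unfolding mat_exp_def by (rule bounded_linear.suminf[OF lin_comp exp_summable])
  also have "\<dots> = (\<Sum>n. ((B ** mat_pow C n) *v \<xi>) $ k / fact n * s^n)"
    by (simp add: mat_pow_scale mm_scaleR_right scaleR_matrix_vector_assoc[symmetric] divide_inverse
        mult.commute mult.left_commute mult.assoc)
  finally show ?thesis .
qed

lemma exp_comp_summable:
  fixes B C :: "real^'n^'n"
  shows "summable (\<lambda>n. ((B ** mat_pow C n) *v \<xi>) $ k / fact n * s^n)"
proof -
  have "summable (\<lambda>n. ((B ** ((1 / fact n) *\<^sub>R mat_pow (s *\<^sub>R C) n)) *v \<xi>) $ k)"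
    by (rule bounded_linear.summable[OF lin_comp exp_summable])
  thus ?thesis
    by (simp add: mat_pow_scale mm_scaleR_right scaleR_matrix_vector_assoc[symmetric] divide_inverse
        mult.commute mult.left_commute mult.assoc)
qed

lemma exp_deriv:
  fixes C :: "real^'n^'n"
  shows "DERIV (\<lambda>s. (mat_exp (s *\<^sub>R C) *v \<xi>) $ k) s :> (C *v (mat_exp (s *\<^sub>R C) *v \<xi>)) $ k"
proof -
  define c where "c n = ((mat 1 ** mat_pow C n) *v \<xi>) $ k / fact n" for n
  have f: "(mat_exp (s *\<^sub>R C) *v \<xi>) $ k = (\<Sum>n. c n * s^n)" for s
    using exp_component[of "mat 1" s C \<xi> k] unfolding c_def by simp
  have "DERIV (\<lambda>s. \<Sum>n. c n * s^n) s :> (\<Sum>n. diffs c n * s^n)"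
    by (rule termdiffs_strong_converges_everywhere) (unfold c_def, rule exp_comp_summable)
  moreover have "(\<Sum>n. diffs c n * s^n) = (C *v (mat_exp (s *\<^sub>R C) *v \<xi>)) $ k"
  proof -
    have "(C *v (mat_exp (s *\<^sub>R C) *v \<xi>)) $ k = ((C ** mat_exp (s *\<^sub>R C)) *v \<xi>) $ k"
      by (simp add: matrix_vector_mul_assoc)
    also have "\<dots> = (\<Sum>n. ((C ** mat_pow C n) *v \<xi>) $ k / fact n * s^n)" by (rule exp_component)
    also have "\<dots> = (\<Sum>n. diffs c n * s^n)"
    proof (rule suminf_cong)
      fix n
      have aux: "real (Suc n) * (Y / fact (Suc n)) = Y / fact n" for Y :: real
      proof -
        have "fact (Suc n) = real (Suc n) * (fact n :: real)" by (rule fact_Suc)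
        moreover have "real (Suc n) \<noteq> 0" by simp
        ultimately show ?thesis by simp
      qed
      show "((C ** mat_pow C n) *v \<xi>) $ k / fact n * s^n = diffs c n * s^n"
        unfolding diffs_def c_def by (simp only: matrix_mul_lid mat_pow_Suc aux)
    qed
    finally show ?thesis by simp
  qed
  ultimately show ?thesis unfolding f by simp
qed




lemma inner_AA:
  assumes sym: "symm3 \<alpha>"
  shows "inner w ((coeff_mat \<alpha> i ** coeff_mat \<alpha> j) *v t) = (Mv \<alpha> w ** Mv \<alpha> t)$i$j"
proof -
  have s1: "\<alpha> q s j = \<alpha> j q s" for q s using sym unfolding symm3_def by blast
  have "inner w ((coeff_mat \<alpha> i ** coeff_mat \<alpha> j) *v t)
      = (\<Sum>a\<in>UNIV. \<Sum>s\<in>UNIV. \<Sum>q\<in>UNIV. w$a * \<alpha> i a q * \<alpha> j q s * t$s)"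
    by (simp add: inner_vec_def matrix_vector_mult_def matrix_matrix_mult_def coeff_mat_def
        sum_distrib_left sum_distrib_right mult_ac)
  also have "\<dots> = (\<Sum>a\<in>UNIV. \<Sum>q\<in>UNIV. \<Sum>s\<in>UNIV. w$a * \<alpha> i a q * \<alpha> j q s * t$s)"
    by (rule sum.cong[OF refl], rule sum.swap)
  also have "\<dots> = (\<Sum>a\<in>UNIV. \<Sum>q\<in>UNIV. \<Sum>s\<in>UNIV. w$a * \<alpha> i a q * \<alpha> q s j * t$s)"
    by (intro sum.cong refl) (simp add: s1)
  also have "\<dots> = (\<Sum>q\<in>UNIV. \<Sum>a\<in>UNIV. \<Sum>s\<in>UNIV. w$a * \<alpha> i a q * \<alpha> q s j * t$s)"
    by (rule sum.swap)
  also have "\<dots> = (Mv \<alpha> w ** Mv \<alpha> t)$i$j"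
    by (simp add: Mv_def matrix_matrix_mult_def sum_distrib_left sum_distrib_right mult_ac)
  finally show ?thesis .
qed

lemma mv_diff: "((A::real^'n^'n) - B) *v x = A *v x - B *v x"
  by (simp add: matrix_vector_mult_def vec_eq_iff sum_subtractf algebra_simps)

lemma part2:
  assumes sym: "symm3 \<alpha>"
    and key: "Mv \<alpha> (Mv \<alpha> t *v t) ** Mv \<alpha> t = Mv \<alpha> t ** Mv \<alpha> (Mv \<alpha> t *v t)"
  shows "inner (Mv \<alpha> t *v t) (commut (coeff_mat \<alpha> i) (coeff_mat \<alpha> j) *v t) = 0"
proof -
  define w where "w = Mv \<alpha> t *v t"
  have "(Mv \<alpha> w ** Mv \<alpha> t)$j$i = (Mv \<alpha> t ** Mv \<alpha> w)$i$j"
  proof -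
    have "(Mv \<alpha> w ** Mv \<alpha> t)$j$i = transpose (Mv \<alpha> w ** Mv \<alpha> t) $i$j"
      by (simp add: transpose_def)
    also have "\<dots> = (Mv \<alpha> t ** Mv \<alpha> w)$i$j"
      by (simp add: matrix_transpose_mul Mv_transpose[OF sym])
    finally show ?thesis .
  qed
  thus ?thesis
    unfolding commut_def mv_diff inner_diff_right inner_AA[OF sym] w_def[symmetric]
    using key unfolding w_def[symmetric] by simp
qed

definition S3 :: "('n::finite \<Rightarrow> 'n \<Rightarrow> 'n \<Rightarrow> real) \<Rightarrow> real^'n \<Rightarrow> real^'n \<Rightarrow> real^'n \<Rightarrow> real" where
  "S3 \<alpha> a b c = (\<Sum>i\<in>UNIV. \<Sum>j\<in>UNIV. \<Sum>k\<in>UNIV. \<alpha> i j k * a$i * b$j * c$k)"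

lemma S3_swap12:
  assumes sym: "symm3 \<alpha>" shows "S3 \<alpha> a b c = S3 \<alpha> b a c"
proof -
  have s: "\<alpha> i j k = \<alpha> j i k" for i j k using sym unfolding symm3_def by blast
  have "S3 \<alpha> a b c = (\<Sum>j\<in>UNIV. \<Sum>i\<in>UNIV. \<Sum>k\<in>UNIV. \<alpha> i j k * a$i * b$j * c$k)"
    unfolding S3_def by (rule sum.swap)
  also have "\<dots> = S3 \<alpha> b a c"
    unfolding S3_def by (intro sum.cong refl) (simp add: s[of _ _ _] mult_ac)
  finally show ?thesis .
qed

lemma S3_swap23:
  assumes sym: "symm3 \<alpha>" shows "S3 \<alpha> a b c = S3 \<alpha> a c b"
proof -
  have s: "\<alpha> i j k = \<alpha> i k j" for i j k using sym unfolding symm3_def by blast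
  have "S3 \<alpha> a b c = (\<Sum>i\<in>UNIV. \<Sum>k\<in>UNIV. \<Sum>j\<in>UNIV. \<alpha> i j k * a$i * b$j * c$k)"
    unfolding S3_def by (rule sum.cong[OF refl], rule sum.swap)
  also have "\<dots> = S3 \<alpha> a c b"
    unfolding S3_def by (intro sum.cong refl) (simp add: s[of _ _ _] mult_ac)
  finally show ?thesis .
qed

lemma S3_inner: "S3 \<alpha> v y y = inner v (Mv \<alpha> y *v y)"
  by (simp add: S3_def inner_vec_def Mv_mult_vec sum_distrib_left mult_ac)




lemma mat_exp_zero: "mat_exp (0::real^'n^'n) = mat 1"
proof -
  have p: "mat_pow (0::real^'n^'n) n = (if n = 0 then mat 1 else 0)" for n
    by (cases n) (simp_all add: mat_pow_Suc mat_pow_0)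
  have "(\<lambda>n. (1 / fact n) *\<^sub>R mat_pow (0::real^'n^'n) n) = (\<lambda>n. if n = 0 then mat 1 else 0)"
    by (auto simp: p)
  moreover have "(\<lambda>n::nat. if n = 0 then (mat 1::real^'n^'n) else 0) sums mat 1"
    using sums_single[of 0 "\<lambda>_. mat 1::real^'n^'n"] by simp
  ultimately show ?thesis unfolding mat_exp_def by (simp add: sums_iff)
qed

lemma cubic_const:
  fixes \<alpha> :: "'n::finite \<Rightarrow> 'n \<Rightarrow> 'n \<Rightarrow> real"
  assumes sym: "symm3 \<alpha>"
    and key: "\<And>u. Mv \<alpha> (Mv \<alpha> u *v u) ** Mv \<alpha> u = Mv \<alpha> u ** Mv \<alpha> (Mv \<alpha> u *v u)"
  shows "cubic_form \<alpha> (mat_exp (s *\<^sub>R commut (coeff_mat \<alpha> i) (coeff_mat \<alpha> j)) *v \<xi>) = cubic_form \<alpha> \<xi>"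
proof -
  define C where "C = commut (coeff_mat \<alpha> i) (coeff_mat \<alpha> j)"
  define Y where "Y s = mat_exp (s *\<^sub>R C) *v \<xi>" for s
  have dY: "DERIV (\<lambda>s. Y s $ k) s :> (C *v Y s) $ k" for k s
    unfolding Y_def by (rule exp_deriv)
  have d: "DERIV (\<lambda>s. cubic_form \<alpha> (Y s)) s :> 0" for s
  proof -
    have "DERIV (\<lambda>s. cubic_form \<alpha> (Y s)) s :>
       S3 \<alpha> (C *v Y s) (Y s) (Y s) + S3 \<alpha> (Y s) (C *v Y s) (Y s) + S3 \<alpha> (Y s) (Y s) (C *v Y s)"
      unfolding cubic_form_def
      apply (rule DERIV_cong)
       apply (rule derivative_eq_intros dY refl)+
      apply (simp add: S3_def sum.distrib[symmetric] algebra_simps)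
      done
    also have "S3 \<alpha> (C *v Y s) (Y s) (Y s) + S3 \<alpha> (Y s) (C *v Y s) (Y s) + S3 \<alpha> (Y s) (Y s) (C *v Y s)
        = 3 * S3 \<alpha> (C *v Y s) (Y s) (Y s)"
      using S3_swap12[OF sym, of "Y s" "C *v Y s" "Y s"] S3_swap23[OF sym, of "Y s" "Y s" "C *v Y s"]
      by simp
    also have "\<dots> = 3 * inner (Mv \<alpha> (Y s) *v Y s) (C *v Y s)"
      by (simp add: S3_inner inner_commute)
    also have "\<dots> = 0" unfolding C_def using part2[OF sym key] by simp
    finally show ?thesis .
  qed
  have "cubic_form \<alpha> (Y s) = cubic_form \<alpha> (Y 0)"
    by (rule DERIV_isconst_all) (use d in blast)
  thus ?thesis unfolding Y_def C_def by (simp add: mat_exp_zero)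
qed


theorem mainTheorem9:
  fixes \<alpha> :: "'n::finite \<Rightarrow> 'n \<Rightarrow> 'n \<Rightarrow> real"
    and \<phi> :: "real^'n \<Rightarrow> real"
    and U :: "(real^'n) set"
  assumes sym: "\<And>i j k. \<alpha> i j k = \<alpha> i k j \<and> \<alpha> i j k = \<alpha> j i k \<and> \<alpha> i j k = \<alpha> j k i
                      \<and> \<alpha> i j k = \<alpha> k i j \<and> \<alpha> i j k = \<alpha> k j i"
    and U0: "0 \<in> U" and C2: "C2_on U \<phi>"
    and pde: "\<And>i t. t \<in> U \<Longrightarrow>
        partial \<phi> i t = (\<Sum>j\<in>UNIV. \<Sum>k\<in>UNIV. \<alpha> i j k * t$j * partial \<phi> k t) + t$i * \<phi> t"
    and nz: "\<phi> 0 \<noteq> 0"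
  shows "\<forall>i j. \<forall>\<xi>::real^'n. \<forall>s::real.
           cubic_form \<alpha> (mat_exp (s *\<^sub>R commut (coeff_mat \<alpha> i) (coeff_mat \<alpha> j)) *v \<xi>) = cubic_form \<alpha> \<xi>"
proof -
  have sym3: "symm3 \<alpha>" unfolding symm3_def using sym by blast
  from C2 obtain g h where U: "open U" and cphi: "continuous_on U \<phi>"
    and hasg: "\<forall>i. \<forall>x\<in>U. has_partial \<phi> i x (g i x)" and cg: "\<forall>i. continuous_on U (g i)"
    and hash: "\<forall>i j. \<forall>x\<in>U. has_partial (g i) j x (h i j x)" and ch: "\<forall>i j. continuous_on U (h i j)"
    unfolding C2_on_def by blast
  have pg: "partial \<phi> i x = g i x" if "x \<in> U" for i x
    unfolding partial_def
    by (rule the_equality) (use hasg that in \<open>auto simp: has_partial_def intro: DERIV_unique\<close>)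
  have pdeg: "g i t = (\<Sum>j\<in>UNIV. \<Sum>k\<in>UNIV. \<alpha> i j k * t$j * g k t) + t$i * \<phi> t" if "t \<in> U" for i t
    using pde[OF that, of i] pg[OF that] by simp
  have key: "Mv \<alpha> (Mv \<alpha> u *v u) ** Mv \<alpha> u = Mv \<alpha> u ** Mv \<alpha> (Mv \<alpha> u *v u)" for u
    by (rule key_commute[OF sym3 U U0, where g=g and h=h, OF _ _ _ _ cphi pdeg nz]) (use hasg hash ch cg in auto)
  show ?thesis using cubic_const[OF sym3 key] by blast
qed

end
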